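(* Let $K$ be a field of characteristic $0$, and let $a(z)=\sum_{i=0}^u a_iz^i$, $b(z)=\sum_{j=0}^v b_jz^j\in K[z]$ with $a_u\ne0$, $b_v\neq 0$. Put $w=\max\{u-2,v-1\}$ and assume $w\ge 0$, and that if $u-1=v$ then $a_u(k+u)+b_v\neq0$ for all integers $k\ge0$. Let $L=-a(z)\frac{d}{dz}+b(z)$ and let $f_0(z),\ldots,f_w(z)\in(1/z)K[[1/z]]$ be linearly independent over $K$ with $L\cdot f_j(z)\in K[z]$ for $0\le j\le w$. Assume moreover that (a) for every positive integer $n$, the polynomials $na'(z)+b(z)$ and $a(z)$ are coprime, and (b) if $u-1=v$, then $a_u((k+1)u+n)+b_v\ne0$ for all integers $k,n\ge0$. Then for every integer $n\ge0$, $\Delta_n(z)\in K\setminus\{0\}$.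
   Context: For $f=\sum_{k\ge0}f_k z^{-k-1}\in(1/z)K[[1/z]]$, $L\cdot f=-a(z)f'(z)+b(z)f(z)$ with termwise differentiation. The formal $f$-integration map $\varphi_f:K[t]\to K$ is the $K$-linear map with $\varphi_f(t^k)=f_k$ ($k\ge0$), extended $K[z]$-linearly to $K[z,t]\to K[z]$. Write $\varphi_j=\varphi_{f_j}$. For integers $n,\ell\ge0$ let $P_{n,\ell}(z)=\frac{1}{n!}\bigl(\frac{d}{dz}+\frac{b(z)}{a(z)}\bigr)^n\bigl(a(z)^n z^\ell\bigr)$ (the operator $\frac{d}{dz}+\frac{b}{a}$ applied $n$ times to $a^nz^\ell$; this is a polynomial), and $Q_{n,j,\ell}(z)=\varphi_j\bigl(\frac{P_{n,\ell}(z)-P_{n,\ell}(t)}{z-t}\bigr)\in K[z]$ for $0\le j\le w$. Then $\Delta_n(z)$ is the determinant of the $(w+2)\times(w+2)$ matrix whose first row is $(P_{n,0}(z),\ldots,P_{n,w+1}(z))$ and whose $(j+2)$-th row is $(Q_{n,j,0}(z),\ldots,Q_{n,j,w+1}(z))$ for $0\le j\le w$. *)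

theory Defs
  imports "HOL-Computational_Algebra.Polynomial" "HOL-Computational_Algebra.Fraction_Field"
    "Jordan_Normal_Form.Determinant"
begin

text \<open>A formal series f = sum_k f_k z^(-k-1) in (1/z)K[[1/z]] is represented by its
coefficient sequence (k \<mapsto> f_k).\<close>

text \<open>Coefficient of z^e (e an integer) in L f = -a f' + b f, computed termwise:
 -a f' = sum_{i,k} (k+1) a_i f_k z^(i-k-2),  b f = sum_{j,k} b_j f_k z^(j-k-1).\<close>
definition L_coeff :: "'a::field poly \<Rightarrow> 'a poly \<Rightarrow> (nat \<Rightarrow> 'a) \<Rightarrow> int \<Rightarrow> 'a" where
  "L_coeff a b f e =
     (\<Sum>i\<le>degree a. if int i - 2 - e \<ge> 0
        then of_nat (nat (int i - 2 - e) + 1) * coeff a i * f (nat (int i - 2 - e)) else 0)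
   + (\<Sum>j\<le>degree b. if int j - 1 - e \<ge> 0
        then coeff b j * f (nat (int j - 1 - e)) else 0)"

definition L_in_poly :: "'a::field poly \<Rightarrow> 'a poly \<Rightarrow> (nat \<Rightarrow> 'a) \<Rightarrow> bool" where
  "L_in_poly a b f \<longleftrightarrow> (\<forall>e<0. L_coeff a b f e = 0)"

definition fract_deriv :: "'a::field poly fract \<Rightarrow> 'a poly fract" where
  "fract_deriv x = (SOME y. \<exists>p q. q \<noteq> 0 \<and> x = Fract p q \<and>
       y = Fract (pderiv p * q - p * pderiv q) (q ^ 2))"

definition P_poly :: "'a::field_char_0 poly \<Rightarrow> 'a poly \<Rightarrow> nat \<Rightarrow> nat \<Rightarrow> 'a poly" where
  "P_poly a b n l = (THE p. Fract p 1 =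
      inverse (of_nat (fact n)) *
      ((\<lambda>x. fract_deriv x + Fract b a * x) ^^ n) (Fract (a ^ n * monom 1 l) 1))"

text \<open>Bivariate polynomials in K[z,t] are represented as polynomials in t with coefficients
in K[z] (type 'a poly poly). The divided difference (P(z)-P(t))/(z-t):\<close>
definition div_diff :: "'a::field poly \<Rightarrow> 'a poly poly" where
  "div_diff P = ([:P:] - map_poly (\<lambda>c. [:c:]) P) div [:[:0, 1:], -1:]"

definition phi :: "(nat \<Rightarrow> 'a::field) \<Rightarrow> 'a poly poly \<Rightarrow> 'a poly" where
  "phi f Q = (\<Sum>k\<le>degree Q. smult (f k) (coeff Q k))"

definition Q_poly :: "'a::field_char_0 poly \<Rightarrow> 'a poly \<Rightarrow> (nat \<Rightarrow> 'a) \<Rightarrow> nat \<Rightarrow> nat \<Rightarrow> 'a poly" where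
  "Q_poly a b fj n l = phi fj (div_diff (P_poly a b n l))"

definition Delta :: "'a::field_char_0 poly \<Rightarrow> 'a poly \<Rightarrow> nat \<Rightarrow> (nat \<Rightarrow> nat \<Rightarrow> 'a) \<Rightarrow> nat \<Rightarrow> 'a poly" where
  "Delta a b w f n = det (mat (w + 2) (w + 2)
     (\<lambda>(i, l). if i = 0 then P_poly a b n l else Q_poly a b (f (i - 1)) n l))"

end

theory Submission
  imports Defs
begin

definition psi :: "(nat \<Rightarrow> 'a::field) \<Rightarrow> 'a poly \<Rightarrow> 'a" where
  "psi f p = (\<Sum>k\<le>degree p. f k * coeff p k)"

lemma psi_ext: assumes "degree p \<le> K" shows "psi f p = (\<Sum>k\<le>K. f k * coeff p k)"
  unfolding psi_def
  by (rule sum.mono_neutral_left) (use assms in \<open>auto simp: coeff_eq_0\<close>)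

lemma psi_add: "psi f (p + q) = psi f p + psi f q"
proof -
  let ?K = "max (degree p) (degree q)"
  have "degree (p+q) \<le> ?K" by (rule degree_add_le) auto
  then show ?thesis
    by (simp add: psi_ext[of _ ?K] sum.distrib distrib_left)
qed

lemma psi_smult: "psi f (smult c p) = c * psi f p"
  by (simp add: psi_ext[of "smult c p" "degree p"] sum_distrib_left ac_simps)
    (simp add: psi_def sum_distrib_left ac_simps)

lemma psi_0[simp]: "psi f 0 = 0" by (simp add: psi_def)

lemma psi_minus: "psi f (- p) = - psi f p"
  using psi_smult[of f "-1" p] by simp

lemma psi_diff: "psi f (p - q) = psi f p - psi f q"
  using psi_add[of f p "-q"] psi_minus[of f q] by simp

lemma psi_sum: "psi f (\<Sum>i\<in>S. g i) = (\<Sum>i\<in>S. psi f (g i))"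
  by (induction S rule: infinite_finite_induct) (auto simp: psi_add)

lemma psi_monom: "psi f (monom c d) = f d * c"
proof -
  have "psi f (monom c d) = (\<Sum>k\<le>d. f k * coeff (monom c d) k)"
    by (rule psi_ext) (simp add: degree_monom_le)
  also have "\<dots> = (\<Sum>k\<le>d. if k = d then f d * c else 0)"
    by (rule sum.cong) (auto simp: coeff_monom)
  finally show ?thesis by simp
qed

lemma pderiv_sum': "pderiv (\<Sum>i\<in>S. g i) = (\<Sum>i\<in>S. pderiv (g i))"
  by (induction S rule: infinite_finite_induct) (auto simp: pderiv_add)

definition Dop :: "'a::field poly \<Rightarrow> 'a poly \<Rightarrow> nat \<Rightarrow> 'a poly \<Rightarrow> 'a poly" where
  "Dop a b c q = a * pderiv q + (smult (of_nat c) (pderiv a) + b) * q"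

lemma Dop_add: "Dop a b c (p + q) = Dop a b c p + Dop a b c q"
  by (simp add: Dop_def pderiv_add distrib_left distrib_right add_ac)

lemma Dop_smult: "Dop a b c (smult x p) = smult x (Dop a b c p)"
  by (simp add: Dop_def pderiv_smult smult_add_right)

lemma Dop_0[simp]: "Dop a b c 0 = 0" by (simp add: Dop_def)

lemma Dop_sum: "Dop a b c (\<Sum>i\<in>S. g i) = (\<Sum>i\<in>S. Dop a b c (g i))"
  by (induction S rule: infinite_finite_induct) (auto simp: Dop_add)

lemma Dop_mult_a: "Dop a b c (a * q) = a * Dop a b (Suc c) q"
proof -
  have s: "smult (of_nat (Suc c)) (pderiv a) = smult (of_nat c) (pderiv a) + pderiv a"
    by (simp add: smult_add_left)
  show ?thesis unfolding Dop_def pderiv_mult s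
    by (simp add: distrib_left distrib_right mult.assoc mult.left_commute add_ac)
qed

lemma Dop_prod: "q * Dop a b 1 g = Dop a b 1 (q * g) - a * pderiv q * g"
proof -
  have "q * Dop a b 1 g + a * pderiv q * g = Dop a b 1 (q * g)"
    unfolding Dop_def pderiv_mult
    by (simp add: distrib_left distrib_right mult.assoc mult.commute mult.left_commute add_ac)
  then show ?thesis by (simp add: eq_diff_eq)
qed

lemma Dop1_alt: "Dop a b 1 q = pderiv (a * q) + b * q"
  unfolding Dop_def pderiv_mult
  by (simp add: distrib_left distrib_right mult.commute add_ac)

lemma psi_Dop_monom:
  fixes a b :: "'a::field_char_0 poly"
  shows "psi f (Dop a b 1 (monom 1 m)) = L_coeff a b f (- int m - 1)"
proof -
  have am: "a * monom 1 m = (\<Sum>i\<le>degree a. monom (coeff a i) (i + m))"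
    by (subst (1) poly_as_sum_of_monoms[symmetric, of a]) (simp add: sum_distrib_right mult_monom)
  have bm: "b * monom 1 m = (\<Sum>i\<le>degree b. monom (coeff b i) (i + m))"
    by (subst (1) poly_as_sum_of_monoms[symmetric, of b]) (simp add: sum_distrib_right mult_monom)
  have "psi f (pderiv (a * monom 1 m)) =
     (\<Sum>i\<le>degree a. f (i + m - 1) * (of_nat (i + m) * coeff a i))"
    by (simp add: am pderiv_sum' pderiv_monom psi_sum psi_monom)
  also have "\<dots> = (\<Sum>i\<le>degree a. if int i - 2 - (- int m - 1) \<ge> 0
        then of_nat (nat (int i - 2 - (- int m - 1)) + 1) * coeff a i * f (nat (int i - 2 - (- int m - 1))) else 0)"
  proof (rule sum.cong[OF refl])
    fix i assume "i \<in> {..degree a}"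
    show "f (i + m - 1) * (of_nat (i + m) * coeff a i) = (if int i - 2 - (- int m - 1) \<ge> 0
        then of_nat (nat (int i - 2 - (- int m - 1)) + 1) * coeff a i * f (nat (int i - 2 - (- int m - 1))) else 0)"
    proof (cases "i + m \<ge> 1")
      case True
      then have "nat (int i - 2 - (- int m - 1)) = i + m - 1" by linarith
      moreover have "nat (int i - 2 - (- int m - 1)) + 1 = i + m" using True by linarith
      moreover have "0 \<le> int i - 2 - (- int m - 1)" using True by linarith
      ultimately show ?thesis by (simp only: if_True mult.commute mult.left_commute)
    next
      case False
      then have "i = 0" "m = 0" by auto
      then show ?thesis by simp
    qed
  qed
  finally have 1: "psi f (pderiv (a * monom 1 m)) = \<dots>" .
  have "psi f (b * monom 1 m) = (\<Sum>j\<le>degree b. f (j + m) * coeff b j)"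
    by (simp add: bm psi_sum psi_monom)
  also have "\<dots> = (\<Sum>j\<le>degree b. if int j - 1 - (- int m - 1) \<ge> 0
        then coeff b j * f (nat (int j - 1 - (- int m - 1))) else 0)"
  proof (rule sum.cong[OF refl])
    fix j
    have "nat (int j - 1 - (- int m - 1)) = j + m" by linarith
    moreover have "0 \<le> int j - 1 - (- int m - 1)" by linarith
    ultimately show "f (j + m) * coeff b j = (if int j - 1 - (- int m - 1) \<ge> 0
        then coeff b j * f (nat (int j - 1 - (- int m - 1))) else 0)" by (simp only: if_True mult.commute)
  qed
  finally have 2: "psi f (b * monom 1 m) = \<dots>" .
  show ?thesis by (simp only: Dop1_alt psi_add 1 2 L_coeff_def)
qed

lemma psi_Dop_zero:
  fixes a b :: "'a::field_char_0 poly"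
  assumes "L_in_poly a b f"
  shows "psi f (Dop a b 1 q) = 0"
proof -
  have eq: "q = (\<Sum>m\<le>degree q. smult (coeff q m) (monom 1 m))"
    by (simp add: smult_monom poly_as_sum_of_monoms)
  have "Dop a b 1 q = (\<Sum>m\<le>degree q. smult (coeff q m) (Dop a b 1 (monom 1 m)))"
    using arg_cong[OF eq, of "Dop a b 1"] by (simp only: Dop_sum Dop_smult)
  then have "psi f (Dop a b 1 q) = (\<Sum>m\<le>degree q. coeff q m * L_coeff a b f (- int m - 1))"
    by (simp only: psi_sum psi_smult psi_Dop_monom)
  also have "\<dots> = 0" using assms unfolding L_in_poly_def
    by (intro sum.neutral) auto
  finally show ?thesis .
qed

lemma coeff_mult_top:
  fixes p r :: "'a::idom poly"
  assumes "degree p \<le> dp" "degree r \<le> dr"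
  shows "coeff (p * r) (dp + dr) = coeff p dp * coeff r dr"
proof (cases "degree p = dp \<and> degree r = dr")
  case True
  then show ?thesis using coeff_mult_degree_sum[of p r] by simp
next
  case False
  then have "degree p < dp \<or> degree r < dr" using assms by auto
  moreover have "degree (p * r) \<le> degree p + degree r" by (rule degree_mult_le)
  ultimately have "degree (p * r) < dp + dr" using assms by linarith
  then have "coeff (p * r) (dp + dr) = 0" by (simp add: coeff_eq_0)
  moreover have "coeff p dp * coeff r dr = 0"
    using \<open>degree p < dp \<or> degree r < dr\<close> by (auto simp: coeff_eq_0)
  ultimately show ?thesis by simp
qed

lemma poly_bezout_ex:
  fixes x y :: "'a::field poly"
  shows "\<exists>s t. (s * x + t * y) dvd x \<and> (s * x + t * y) dvd y"
proof (induction "degree y + (if y = 0 then 0 else 1)" arbitrary: x y rule: less_induct)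
  case less
  show ?case
  proof (cases "y = 0")
    case True
    then show ?thesis by (intro exI[of _ 1] exI[of _ 0]) simp
  next
    case False
    have "x mod y = 0 \<or> degree (x mod y) < degree y" using degree_mod_less[OF False] .
    then have "degree (x mod y) + (if x mod y = 0 then 0 else 1) < degree y + (if y = 0 then 0 else 1)"
      using False by auto
    from less[OF this] obtain s t where st: "(s * y + t * (x mod y)) dvd y" "(s * y + t * (x mod y)) dvd (x mod y)"
      by blast
    have xm: "x mod y = x - x div y * y" by (simp add: minus_div_mult_eq_mod)
    have deq: "s * y + t * (x mod y) = t * x + (s - t * (x div y)) * y"
      unfolding xm by (simp only: right_diff_distrib left_diff_distrib distrib_left distrib_right mult_ac diff_add_eq add_diff_eq add_ac diff_diff_eq2)
    have "x = x div y * y + x mod y" by simp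
    then have "(s * y + t * (x mod y)) dvd x" using st by (metis dvd_add dvd_mult)
    then show ?thesis using st(1) unfolding deq by blast
  qed
qed

lemma coprime_dvd_poly:
  fixes X a q :: "'a::field poly"
  assumes "coprime X a" "a dvd X * q"
  shows "a dvd q"
proof -
  obtain s t where st: "(s * X + t * a) dvd X" "(s * X + t * a) dvd a" using poly_bezout_ex by blast
  have "is_unit (s * X + t * a)" using coprime_common_divisor[OF assms(1) st] .
  then obtain e where e: "1 = (s * X + t * a) * e" by (elim dvdE)
  have "q = ((s * X + t * a) * e) * q" using e by simp
  also have "\<dots> = e * (s * (X * q) + t * a * q)" by (simp only: distrib_left distrib_right mult_ac)
  finally have "q = e * (s * (X * q) + t * a * q)" .
  moreover have "a dvd e * (s * (X * q) + t * a * q)" using assms(2) by simp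
  ultimately show ?thesis by simp
qed

locale padeS =
  fixes a b :: "'a::field_char_0 poly" and w :: nat
  assumes a_nz: "a \<noteq> 0" and b_nz: "b \<noteq> 0"
    and w_def: "int w = max (int (degree a) - 2) (int (degree b) - 1)"
    and cond_a: "\<And>n::nat. n > 0 \<Longrightarrow> coprime (smult (of_nat n) (pderiv a) + b) a"
    and cond_b: "int (degree a) - 1 = int (degree b) \<Longrightarrow>
        \<forall>k n::nat. lead_coeff a * of_nat ((k + 1) * degree a + n) + lead_coeff b \<noteq> 0"
begin

abbreviation "D \<equiv> Dop a b"

lemma deg_a: "degree a \<le> w + 2" using w_def by linarith
lemma deg_b: "degree b \<le> w + 1" using w_def by linarith
lemma deg_ab: "degree a = w + 2 \<or> degree b = w + 1" using w_def by linarith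

lemma coeff_a_top: "coeff a (w + 2) = (if degree a = w + 2 then lead_coeff a else 0)"
  using deg_a by (auto simp: coeff_eq_0)
lemma coeff_b_top: "coeff b (w + 1) = (if degree b = w + 1 then lead_coeff b else 0)"
  using deg_b by (auto simp: coeff_eq_0)

lemma deg_A: "degree (smult (of_nat c) (pderiv a) + b) \<le> w + 1"
proof -
  have "degree (pderiv a) \<le> w + 1" using deg_a by (simp add: degree_pderiv)
  then have "degree (smult (of_nat c) (pderiv a)) \<le> w + 1"
    by (meson degree_smult_le order_trans)
  then show ?thesis using deg_b by (intro degree_add_le) auto
qed

lemma Dop_degree: "degree (D c q) \<le> degree q + w + 1"
proof -
  have 1: "degree (a * pderiv q) \<le> degree q + w + 1"
  proof (cases "degree q = 0")
    case True
    then have "pderiv q = 0" by (simp add: pderiv_eq_0_iff)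
    then show ?thesis by simp
  next
    case False
    have "degree (a * pderiv q) \<le> degree a + degree (pderiv q)" by (rule degree_mult_le)
    also have "\<dots> \<le> degree q + w + 1" using deg_a False by (simp add: degree_pderiv)
    finally show ?thesis .
  qed
  have 2: "degree ((smult (of_nat c) (pderiv a) + b) * q) \<le> degree q + w + 1"
    using degree_mult_le[of "smult (of_nat c) (pderiv a) + b" q] deg_A[of c] by linarith
  show ?thesis unfolding Dop_def using 1 2 by (intro degree_add_le)
qed

lemma Dop_top_coeff:
  "coeff (D c q) (degree q + w + 1) =
     lead_coeff q * ((if degree a = w + 2 then lead_coeff a * (of_nat (degree q) + of_nat c * of_nat (w + 2)) else 0)
       + (if degree b = w + 1 then lead_coeff b else 0))"
proof -
  let ?s = "degree q"
  have 1: "coeff (a * pderiv q) (?s + w + 1) =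
      (if degree a = w + 2 then lead_coeff a * of_nat ?s * lead_coeff q else 0)"
  proof (cases "?s = 0")
    case True
    then have "pderiv q = 0" by (simp add: pderiv_eq_0_iff)
    then show ?thesis using True by simp
  next
    case False
    have dp: "degree (pderiv q) \<le> ?s - 1" by (simp add: degree_pderiv)
    have e: "(w + 2) + (?s - 1) = ?s + w + 1" using False by simp
    have "coeff (a * pderiv q) (?s + w + 1) = coeff a (w + 2) * coeff (pderiv q) (?s - 1)"
      by (subst e[symmetric]) (rule coeff_mult_top[OF deg_a dp])
    moreover have "coeff (pderiv q) (?s - 1) = of_nat ?s * lead_coeff q"
      using False by (simp add: coeff_pderiv)
    ultimately have "coeff (a * pderiv q) (?s + w + 1) = coeff a (w + 2) * (of_nat ?s * lead_coeff q)"
      by simp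
    then show ?thesis unfolding coeff_a_top by (simp add: mult.assoc)
  qed
  have 2: "coeff ((smult (of_nat c) (pderiv a) + b) * q) (?s + w + 1) =
     coeff (smult (of_nat c) (pderiv a) + b) (w + 1) * lead_coeff q"
    using coeff_mult_top[OF deg_A order_refl, of c q] by (simp add: add_ac)
  have 3: "coeff (smult (of_nat c) (pderiv a) + b) (w + 1) =
     of_nat c * (of_nat (w + 2) * coeff a (w + 2)) + coeff b (w + 1)"
    by (simp add: coeff_pderiv)
  have "coeff (D c q) (?s + w + 1) = coeff (a * pderiv q) (?s + w + 1)
      + coeff ((smult (of_nat c) (pderiv a) + b) * q) (?s + w + 1)"
    by (simp only: Dop_def coeff_add)
  also have "\<dots> = (if degree a = w + 2 then lead_coeff a * of_nat ?s * lead_coeff q else 0)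
      + (of_nat c * (of_nat (w + 2) * coeff a (w + 2)) + coeff b (w + 1)) * lead_coeff q"
    by (simp only: 1 2 3)
  finally show ?thesis unfolding coeff_a_top coeff_b_top
    by (cases "degree a = w + 2"; cases "degree b = w + 1") (simp_all add: algebra_simps)
qed

lemma Dop_top_nz:
  assumes "c \<ge> 1" "q \<noteq> 0"
  shows "coeff (D c q) (degree q + w + 1) \<noteq> 0"
proof -
  have lq: "lead_coeff q \<noteq> 0" using assms by simp
  have la: "lead_coeff a \<noteq> 0" using a_nz by simp
  have lb: "lead_coeff b \<noteq> 0" using b_nz by simp
  have "(if degree a = w + 2 then lead_coeff a * (of_nat (degree q) + of_nat c * of_nat (w + 2)) else 0)
       + (if degree b = w + 1 then lead_coeff b else 0) \<noteq> 0"
  proof (cases "degree a = w + 2")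
    case True
    note Ta = True
    show ?thesis
    proof (cases "degree b = w + 1")
      case True
      then have "int (degree a) - 1 = int (degree b)" using Ta by simp
      from cond_b[OF this] have X: "lead_coeff a * of_nat ((c - 1 + 1) * degree a + degree q) + lead_coeff b \<noteq> 0"
        by blast
      have n: "(c - 1 + 1) * degree a + degree q = degree q + c * (w + 2)"
        using assms(1) Ta by simp
      have ofeq: "(of_nat ((c - 1 + 1) * degree a + degree q) :: 'a) = of_nat (degree q) + of_nat c * of_nat (w + 2)"
        by (simp only: n of_nat_add of_nat_mult)
      have "lead_coeff a * (of_nat (degree q) + of_nat c * of_nat (w + 2)) + lead_coeff b \<noteq> 0"
        using X unfolding ofeq .
      then show ?thesis using Ta True by simp
    next
      case False
      have "(of_nat (degree q + c * (w + 2)) :: 'a) \<noteq> 0"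
        using assms(1) by (simp only: of_nat_eq_0_iff) simp
      moreover have eq: "(of_nat (degree q + c * (w + 2)) :: 'a) = of_nat (degree q) + of_nat c * of_nat (w + 2)"
        by (simp only: of_nat_add of_nat_mult)
      ultimately have "(of_nat (degree q) + of_nat c * of_nat (w + 2) :: 'a) \<noteq> 0"
        by argo
      then show ?thesis using Ta False la by simp
    qed
  next
    case False
    then have "degree b = w + 1" using deg_ab by simp
    then show ?thesis using False lb by simp
  qed
  then show ?thesis unfolding Dop_top_coeff using lq by simp
qed

lemma Dop_degree_eq:
  assumes "c \<ge> 1" "q \<noteq> 0"
  shows "degree (D c q) = degree q + w + 1"
  using Dop_degree[of c q] Dop_top_nz[OF assms] le_degree by (metis antisym)

lemma rec_zero:
  assumes psi0: "\<And>q. psi g (D 1 q) = 0" and init: "\<And>m. m \<le> w \<Longrightarrow> g m = 0"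
  shows "g k = 0"
proof (induction k rule: less_induct)
  case (less k)
  show ?case
  proof (cases "k \<le> w")
    case True
    then show ?thesis using init by simp
  next
    case False
    define s where "s = k - w - 1"
    have ks: "degree (monom (1::'a) s) + w + 1 = k" using False by (simp add: s_def degree_monom_eq)
    let ?Q = "D 1 (monom 1 s)"
    have dQ: "degree ?Q \<le> k" using Dop_degree[of 1 "monom 1 s"] ks by simp
    have cQ: "coeff ?Q k \<noteq> 0" using Dop_top_nz[of 1 "monom 1 s"] ks by simp
    have "0 = psi g ?Q" using psi0 by simp
    also have "\<dots> = (\<Sum>i\<le>k. g i * coeff ?Q i)" by (rule psi_ext[OF dQ])
    also have "\<dots> = (\<Sum>i<k. g i * coeff ?Q i) + g k * coeff ?Q k"
      by (simp add: lessThan_Suc_atMost[symmetric])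
    also have "(\<Sum>i<k. g i * coeff ?Q i) = 0" using less.IH by simp
    finally show ?thesis using cQ by simp
  qed
qed

lemma reduce: "\<exists>q r. g = D 1 q + r \<and> degree r \<le> w"
proof (induction "degree g" arbitrary: g rule: less_induct)
  case less
  show ?case
  proof (cases "degree g \<le> w")
    case True
    then show ?thesis by (intro exI[of _ 0] exI[of _ g]) simp
  next
    case False
    define d where "d = degree g"
    define s where "s = d - w - 1"
    have ks: "degree (monom (1::'a) s) + w + 1 = d" using False by (simp add: s_def d_def degree_monom_eq)
    let ?Q = "D 1 (monom 1 s)"
    have dQ: "degree ?Q \<le> d" using Dop_degree[of 1 "monom 1 s"] ks by simp
    have cQ: "coeff ?Q d \<noteq> 0" using Dop_top_nz[of 1 "monom 1 s"] ks by simp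
    define g' where "g' = g - smult (lead_coeff g / coeff ?Q d) ?Q"
    have "degree (smult (lead_coeff g / coeff ?Q d) ?Q) \<le> d" by (rule order_trans[OF degree_smult_le dQ])
    then have dg': "degree g' \<le> d" unfolding g'_def by (intro degree_diff_le) (simp_all add: d_def)
    have cg': "coeff g' d = 0" unfolding g'_def using cQ by (simp add: d_def)
    have "degree g' < degree g"
    proof (rule ccontr)
      assume "\<not> degree g' < degree g"
      then have "degree g' = d" using dg' d_def by simp
      then have "g' = 0" using cg' leading_coeff_0_iff[of g'] by simp
      then have "degree g' = 0" by simp
      then show False using \<open>degree g' = d\<close> False d_def by simp
    qed
    from less.hyps[OF this] obtain q r where qr: "g' = D 1 q + r" "degree r \<le> w" by blast
    have "g = g' + smult (lead_coeff g / coeff ?Q d) ?Q" by (simp add: g'_def)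
    also have "\<dots> = D 1 q + smult (lead_coeff g / coeff ?Q d) ?Q + r" by (simp add: qr(1) add_ac)
    finally have eqg: "g = D 1 (q + smult (lead_coeff g / coeff ?Q d) (monom 1 s)) + r"
      by (simp only: Dop_add Dop_smult)
    show ?thesis by (rule exI, rule exI, rule conjI[OF eqg qr(2)])
  qed
qed

lemma descent:
  assumes "a ^ k * p = D c q" "c \<ge> 1" "degree p \<le> w"
  shows "p = 0"
  using assms
proof (induction k arbitrary: c q)
  case 0
  show ?case
  proof (cases "q = 0")
    case True
    then show ?thesis using 0 by simp
  next
    case False
    have "coeff (D c q) (degree q + w + 1) \<noteq> 0" using Dop_top_nz[OF 0(2) False] .
    moreover have "coeff p (degree q + w + 1) = 0" using 0(3) by (simp add: coeff_eq_0)
    ultimately show ?thesis using 0(1) by simp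
  qed
next
  case (Suc k)
  let ?A = "smult (of_nat c) (pderiv a) + b"
  have cop: "coprime ?A a" using cond_a[of c] Suc.prems(2) by simp
  have "a * (a ^ k * p) = a * pderiv q + ?A * q" using Suc.prems(1) by (simp add: Dop_def mult.assoc)
  then have "?A * q = a * (a ^ k * p) - a * pderiv q" by (simp add: eq_diff_eq add.commute)
  then have "?A * q = a * (a ^ k * p - pderiv q)" by (simp add: right_diff_distrib)
  then have "a dvd ?A * q" by simp
  then have "a dvd q" using coprime_dvd_poly[OF cop] by blast
  then obtain q1 where q1: "q = a * q1" by (elim dvdE)
  have "a * (a ^ k * p) = a * D (Suc c) q1"
    using Suc.prems(1) unfolding q1 Dop_mult_a by (simp add: mult.assoc)
  then have "a ^ k * p = D (Suc c) q1" using a_nz by simp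
  from Suc.IH[OF this] Suc.prems(3) show ?case by simp
qed

end

fun hseq :: "'a::field_char_0 poly \<Rightarrow> 'a poly \<Rightarrow> nat \<Rightarrow> nat \<Rightarrow> nat \<Rightarrow> 'a poly" where
  "hseq a b n l 0 = monom 1 l"
| "hseq a b n l (Suc k) = Dop a b (n - k) (hseq a b n l k)"

lemma Dop_mult_apow: "Dop a b c (a ^ m * h) = a ^ m * Dop a b (c + m) h"
proof (induction m arbitrary: c)
  case 0
  then show ?case by simp
next
  case (Suc m)
  have "Dop a b c (a ^ Suc m * h) = Dop a b c (a * (a ^ m * h))" by (simp add: mult.assoc)
  also have "\<dots> = a * Dop a b (Suc c) (a ^ m * h)" by (rule Dop_mult_a)
  also have "\<dots> = a * (a ^ m * Dop a b (Suc c + m) h)" by (simp only: Suc.IH)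
  finally show ?case by (simp add: mult.assoc)
qed

lemma hseq_step:
  assumes "k < n"
  shows "a ^ (n - Suc k) * hseq a b n l (Suc k) = Dop a b 1 (a ^ (n - Suc k) * hseq a b n l k)"
proof -
  have "1 + (n - Suc k) = n - k" using assms by simp
  then show ?thesis by (simp only: Dop_mult_apow hseq.simps(2))
qed

lemma hseq_prev:
  assumes "k < n"
  shows "a ^ (n - k) * hseq a b n l k = a * (a ^ (n - Suc k) * hseq a b n l k)"
proof -
  have "n - k = Suc (n - Suc k)" using assms by simp
  then show ?thesis by (simp add: mult.assoc)
qed

lemma higher_pderiv_0: "(pderiv ^^ k) 0 = 0"
  by (induction k) auto

lemma higher_pderiv_small:
  fixes p :: "'a::field_char_0 poly"
  shows "degree p < k \<Longrightarrow> (pderiv ^^ k) p = 0"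
proof (induction k arbitrary: p)
  case 0
  then show ?case by simp
next
  case (Suc k)
  have "(pderiv ^^ Suc k) p = (pderiv ^^ k) (pderiv p)" by (simp add: funpow_Suc_right del: funpow.simps)
  also have "\<dots> = 0"
  proof (cases "degree p = 0")
    case True
    then have "pderiv p = 0" by (simp add: pderiv_eq_0_iff)
    then show ?thesis by (simp add: higher_pderiv_0)
  next
    case False
    then have "degree (pderiv p) < k" using Suc.prems by (simp add: degree_pderiv)
    then show ?thesis by (rule Suc.IH)
  qed
  finally show ?case .
qed

lemma higher_pderiv_monom_eq:
  fixes c :: "'a::field_char_0"
  shows "(pderiv ^^ k) (monom c k) = [:c * of_nat (fact k):]"
proof (induction k arbitrary: c)
  case 0
  then show ?case by (simp add: monom_0)
next
  case (Suc k)
  have "(pderiv ^^ Suc k) (monom c (Suc k)) = (pderiv ^^ k) (pderiv (monom c (Suc k)))"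
    by (simp add: funpow_Suc_right del: funpow.simps)
  also have "\<dots> = (pderiv ^^ k) (monom (of_nat (Suc k) * c) k)" by (simp add: pderiv_monom)
  also have "\<dots> = [:of_nat (Suc k) * c * of_nat (fact k):]" by (rule Suc.IH)
  also have "\<dots> = [:c * of_nat (fact (Suc k)):]" by (simp add: algebra_simps)
  finally show ?case .
qed

lemma psi_hseq:
  assumes psi0: "\<And>q. psi f (Dop a b 1 q) = 0" and "k \<le> n"
  shows "psi f (q * (a ^ (n - k) * hseq a b n l k)) = (-1) ^ k * psi f ((pderiv ^^ k) q * (a ^ n * monom 1 l))"
  using assms(2)
proof (induction k arbitrary: q)
  case 0
  then show ?case by simp
next
  case (Suc k)
  let ?g = "a ^ (n - Suc k) * hseq a b n l k"
  have kn: "k < n" using Suc.prems by simp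
  have e1: "psi f (q * (a ^ (n - Suc k) * hseq a b n l (Suc k))) =
      psi f (Dop a b 1 (q * ?g)) - psi f (a * pderiv q * ?g)"
    by (simp only: hseq_step[OF kn] Dop_prod psi_diff)
  have e2: "psi f (Dop a b 1 (q * ?g)) = 0" by (rule psi0)
  have e3: "a * pderiv q * ?g = pderiv q * (a ^ (n - k) * hseq a b n l k)"
    by (simp only: hseq_prev[of k n a b l, OF kn] mult_ac)
  have e4: "psi f (pderiv q * (a ^ (n - k) * hseq a b n l k)) =
      (-1) ^ k * psi f ((pderiv ^^ k) (pderiv q) * (a ^ n * monom 1 l))"
    using Suc.IH[of "pderiv q"] kn by simp
  have "psi f (q * (a ^ (n - Suc k) * hseq a b n l (Suc k))) =
      - ((-1) ^ k * psi f ((pderiv ^^ k) (pderiv q) * (a ^ n * monom 1 l)))"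
    unfolding e1 e2 e3 e4 by simp
  also have "\<dots> = (-1) ^ Suc k * psi f ((pderiv ^^ Suc k) q * (a ^ n * monom 1 l))"
    by (simp add: funpow_Suc_right del: funpow.simps)
  finally show ?case .
qed

lemma fract_deriv_poly: "fract_deriv (Fract p 1) = Fract (pderiv p) (1 :: 'a::field poly)"
  unfolding fract_deriv_def
proof (rule someI2_ex)
  show "\<exists>y p' q. q \<noteq> 0 \<and> Fract p 1 = Fract p' q \<and> y = Fract (pderiv p' * q - p' * pderiv q) (q ^ 2)"
    by (rule exI[of _ "Fract (pderiv p * 1 - p * pderiv 1) (1 ^ 2)"], rule exI[of _ p], rule exI[of _ 1]) simp
next
  fix y assume "\<exists>p' q. q \<noteq> 0 \<and> Fract p 1 = Fract p' q \<and> y = Fract (pderiv p' * q - p' * pderiv q) (q ^ 2)"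
  then obtain p' q where q: "q \<noteq> 0" and e: "Fract p 1 = Fract p' q"
    and y: "y = Fract (pderiv p' * q - p' * pderiv q) (q ^ 2)" by blast
  from e q have p': "p' = p * q" by (simp add: eq_fract)
  have "pderiv p' * q - p' * pderiv q = pderiv p * q ^ 2"
    unfolding p' pderiv_mult by (simp add: algebra_simps power2_eq_square)
  then show "y = Fract (pderiv p) 1" unfolding y using q by (simp add: eq_fract)
qed

context padeS
begin

lemma hseq_iter:
  assumes "k \<le> n"
  shows "((\<lambda>x. fract_deriv x + Fract b a * x) ^^ k) (Fract (a ^ n * monom 1 l) 1) =
    Fract (a ^ (n - k) * hseq a b n l k) 1"
  using assms
proof (induction k)
  case 0
  then show ?case by simp
next
  case (Suc k)
  have kn: "k < n" using Suc.prems by simp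
  let ?g = "a ^ (n - Suc k) * hseq a b n l k"
  have IH: "((\<lambda>x. fract_deriv x + Fract b a * x) ^^ k) (Fract (a ^ n * monom 1 l) 1) = Fract (a * ?g) 1"
    using Suc.IH kn by (simp only: hseq_prev[of k n a b l, OF kn] less_imp_le)
  have "Fract b a * Fract (a * ?g) 1 = Fract (b * ?g) 1"
    using a_nz by (simp add: eq_fract algebra_simps)
  then have "((\<lambda>x. fract_deriv x + Fract b a * x) ^^ Suc k) (Fract (a ^ n * monom 1 l) 1) =
      Fract (pderiv (a * ?g)) 1 + Fract (b * ?g) 1"
    by (simp add: IH fract_deriv_poly)
  also have "\<dots> = Fract (pderiv (a * ?g) + b * ?g) 1" by (simp add: add_fract)
  also have "\<dots> = Fract (Dop a b 1 ?g) 1" by (simp only: Dop1_alt)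
  also have "\<dots> = Fract (a ^ (n - Suc k) * hseq a b n l (Suc k)) 1" by (simp only: hseq_step[OF kn])
  finally show ?case .
qed

lemma P_poly_eq: "P_poly a b n l = smult (inverse (of_nat (fact n))) (hseq a b n l n)"
proof -
  have fn: "(of_nat (fact n) :: 'a) \<noteq> 0" by simp
  have "inverse (of_nat (fact n)) *
      ((\<lambda>x. fract_deriv x + Fract b a * x) ^^ n) (Fract (a ^ n * monom 1 l) 1) =
      Fract (smult (inverse (of_nat (fact n))) (hseq a b n l n)) 1"
    unfolding hseq_iter[OF order_refl] using fn
    by (simp add: of_nat_fract eq_fract of_nat_poly)
  then show ?thesis unfolding P_poly_def
    by (intro the_equality) (simp_all add: eq_fract)
qed

lemma hseq_degree:
  assumes "k \<le> n"
  shows "hseq a b n l k \<noteq> 0 \<and> degree (hseq a b n l k) = l + k * (w + 1)"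
  using assms
proof (induction k)
  case 0
  then show ?case by (simp add: degree_monom_eq)
next
  case (Suc k)
  then have kn: "k < n" and IH: "hseq a b n l k \<noteq> 0" "degree (hseq a b n l k) = l + k * (w + 1)" by auto
  have c: "n - k \<ge> 1" using kn by simp
  have "degree (hseq a b n l (Suc k)) = l + k * (w + 1) + w + 1"
    using Dop_degree_eq[OF c IH(1)] IH(2) by simp
  moreover have "hseq a b n l (Suc k) \<noteq> 0"
    using Dop_top_nz[OF c IH(1)] by (auto simp: coeff_eq_0)
  ultimately show ?case by simp
qed

lemma P_degree: "degree (P_poly a b n l) = l + n * (w + 1)" "P_poly a b n l \<noteq> 0"
  using hseq_degree[of n n l] by (simp_all add: P_poly_eq)

lemma psi_P:
  assumes psi0: "\<And>q. psi f (Dop a b 1 q) = 0" and "s \<le> n"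
  shows "psi f (monom 1 s * P_poly a b n l) = (if s < n then 0 else (-1) ^ n * psi f (a ^ n * monom 1 l))"
proof -
  have "psi f (monom 1 s * P_poly a b n l) = inverse (of_nat (fact n)) * psi f (monom 1 s * (a ^ (n - n) * hseq a b n l n))"
    by (simp add: P_poly_eq psi_smult mult_smult_right)
  also have "\<dots> = inverse (of_nat (fact n)) * ((-1) ^ n * psi f ((pderiv ^^ n) (monom 1 s) * (a ^ n * monom 1 l)))"
    by (simp only: psi_hseq[OF psi0 order_refl])
  also have "\<dots> = (if s < n then 0 else (-1) ^ n * psi f (a ^ n * monom 1 l))"
  proof (cases "s < n")
    case True
    then show ?thesis by (simp add: higher_pderiv_small degree_monom_eq)
  next
    case False
    then have "s = n" using assms(2) by simp
    then show ?thesis by (simp add: higher_pderiv_monom_eq psi_smult)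
  qed
  finally show ?thesis .
qed

end

definition Gdd :: "'a::field poly \<Rightarrow> 'a poly poly" where
  "Gdd P = Abs_poly (\<lambda>m. poly_shift (Suc m) P)"

lemma coeff_Gdd: "coeff (Gdd P) m = poly_shift (Suc m) P"
proof -
  have "\<And>m. degree P < m \<Longrightarrow> poly_shift (Suc m) P = 0"
    by (rule poly_eqI) (simp add: coeff_poly_shift coeff_eq_0)
  then have "coeff (Gdd P) = (\<lambda>m. poly_shift (Suc m) P)"
    unfolding Gdd_def by (intro coeff_Abs_poly) blast
  then show ?thesis by simp
qed

lemma div_diff_eq: "div_diff P = Gdd P"
proof -
  have eq: "[:P:] - map_poly (\<lambda>c. [:c:]) P = [:[:0, 1:], -1:] * Gdd P"
  proof (rule poly_eqI)
    fix m
    show "coeff ([:P:] - map_poly (\<lambda>c. [:c:]) P) m = coeff ([:[:0, 1:], -1:] * Gdd P) m"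
    proof (rule poly_eqI)
      fix e
      have L: "coeff (coeff ([:P:] - map_poly (\<lambda>c. [:c:]) P) m) e =
          (if m = 0 then coeff P e else 0) - (if e = 0 then coeff P m else 0)"
        by (simp add: coeff_map_poly coeff_pCons split: nat.split)
      have R0: "coeff ([:[:0, 1:], -1:] * Gdd P) m = pCons 0 (coeff (Gdd P) m) - (if m = 0 then 0 else coeff (Gdd P) (m - 1))"
        by (cases m) (simp_all add: coeff_pCons)
      have R: "coeff (coeff ([:[:0, 1:], -1:] * Gdd P) m) e =
          (if e = 0 then 0 else coeff P (e + m)) - (if m = 0 then 0 else coeff P (e + m))"
        unfolding R0 by (cases e; cases m) (simp_all add: coeff_Gdd coeff_poly_shift coeff_pCons)
      show "coeff (coeff ([:P:] - map_poly (\<lambda>c. [:c:]) P) m) e = coeff (coeff ([:[:0, 1:], -1:] * Gdd P) m) e"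
        unfolding L R by (cases e; cases m) simp_all
    qed
  qed
  have nz: "[:[:0, 1:], -1:] \<noteq> (0 :: 'a poly poly)" by simp
  show ?thesis unfolding div_diff_def eq by (rule nonzero_mult_div_cancel_left[OF nz])
qed

lemma coeff_Q_poly:
  fixes a b :: "'a::field_char_0 poly"
  assumes "degree (P_poly a b n l) \<le> K"
  shows "coeff (Q_poly a b f n l) e = (\<Sum>k\<le>K. f k * coeff (P_poly a b n l) (e + Suc k))"
proof -
  let ?P = "P_poly a b n l"
  have dG: "degree (Gdd ?P) \<le> K"
  proof (rule degree_le, intro allI impI)
    fix i assume "K < i"
    show "coeff (Gdd ?P) i = 0"
      by (rule poly_eqI) (use \<open>K < i\<close> assms in \<open>auto simp: coeff_Gdd coeff_poly_shift coeff_eq_0\<close>)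
  qed
  have "coeff (Q_poly a b f n l) e = (\<Sum>k\<le>degree (Gdd ?P). f k * coeff ?P (e + Suc k))"
    unfolding Q_poly_def div_diff_eq phi_def by (simp add: coeff_sum coeff_Gdd coeff_poly_shift)
  also have "\<dots> = (\<Sum>k\<le>K. f k * coeff ?P (e + Suc k))"
  proof (rule sum.mono_neutral_left)
    show "\<forall>i\<in>{..K} - {..degree (Gdd ?P)}. f i * coeff ?P (e + Suc i) = 0"
    proof
      fix i assume "i \<in> {..K} - {..degree (Gdd ?P)}"
      then have "coeff (Gdd ?P) i = 0" by (simp add: coeff_eq_0)
      then have "coeff (coeff (Gdd ?P) i) e = 0" by simp
      then show "f i * coeff ?P (e + Suc i) = 0" by (simp add: coeff_Gdd coeff_poly_shift add_ac)
    qed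
  qed (use dG in auto)
  finally show ?thesis .
qed

definition Fpoly :: "(nat \<Rightarrow> 'a::field) \<Rightarrow> nat \<Rightarrow> 'a poly" where
  "Fpoly f N = (\<Sum>k<N. monom (f k) (N - 1 - k))"

lemma monom_mult_smult: "monom (c::'a::field) d * P = smult c (monom 1 d * P)"
  by (simp add: poly_eq_iff coeff_monom_mult)

lemma coeff_F_mult: "coeff (Fpoly f N * P) e = (\<Sum>k<N. f k * coeff (monom 1 (N - 1 - k) * P) e)"
proof -
  have "Fpoly f N * P = (\<Sum>k<N. smult (f k) (monom 1 (N - 1 - k) * P))"
    unfolding Fpoly_def sum_distrib_right by (rule sum.cong[OF refl]) (rule monom_mult_smult)
  then show ?thesis by (simp add: coeff_sum)
qed

lemma coeff_monom_swap:
  assumes "e < N" "k < N"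
  shows "coeff (monom (1::'a::field) (N - 1 - k) * P) e = coeff (monom 1 (N - 1 - e) * P) k"
proof -
  have c: "(e < N - 1 - k) = (k < N - 1 - e)" using assms by linarith
  have i: "e - (N - 1 - k) = k - (N - 1 - e)" using assms by linarith
  show ?thesis unfolding coeff_monom_mult c i by (rule refl)
qed

lemma coeff_Bent_low:
  fixes a b :: "'a::field_char_0 poly"
  assumes "degree (P_poly a b n l) \<le> DP" "e < N" "N - 1 - e + DP \<le> N - 1"
  shows "coeff (monom 1 N * Q_poly a b f n l - Fpoly f N * P_poly a b n l) e
     = - psi f (monom 1 (N - 1 - e) * P_poly a b n l)"
proof -
  let ?P = "P_poly a b n l"
  have 1: "coeff (monom 1 N * Q_poly a b f n l) e = 0" using assms(2) by (simp add: coeff_monom_mult)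
  have "coeff (Fpoly f N * ?P) e = (\<Sum>k<N. f k * coeff (monom 1 (N - 1 - e) * ?P) k)"
    unfolding coeff_F_mult
  proof (rule sum.cong[OF refl])
    fix k assume "k \<in> {..<N}"
    then show "f k * coeff (monom 1 (N - 1 - k) * ?P) e = f k * coeff (monom 1 (N - 1 - e) * ?P) k"
      using coeff_monom_swap[OF assms(2), of k ?P] by simp
  qed
  also have "\<dots> = (\<Sum>k\<le>N - 1. f k * coeff (monom 1 (N - 1 - e) * ?P) k)"
    using assms(2) by (intro sum.cong) auto
  also have "\<dots> = psi f (monom 1 (N - 1 - e) * ?P)"
  proof (rule psi_ext[symmetric])
    have "degree (monom (1::'a) (N - 1 - e) * ?P) \<le> (N - 1 - e) + degree ?P"
      using degree_mult_le[of "monom (1::'a) (N - 1 - e)" ?P] degree_monom_le[of "1::'a" "N - 1 - e"] by linarith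
    then show "degree (monom 1 (N - 1 - e) * ?P) \<le> N - 1" using assms(1,3) by linarith
  qed
  finally show ?thesis using 1 by simp
qed

lemma coeff_Bent_high:
  fixes a b :: "'a::field_char_0 poly"
  assumes "degree (P_poly a b n l) \<le> N" "N \<le> e"
  shows "coeff (monom 1 N * Q_poly a b f n l - Fpoly f N * P_poly a b n l) e = 0"
proof -
  let ?P = "P_poly a b n l"
  have "coeff (monom 1 N * Q_poly a b f n l) e = coeff (Q_poly a b f n l) (e - N)"
    using assms(2) by (simp add: coeff_monom_mult)
  also have "\<dots> = (\<Sum>k\<le>N. f k * coeff ?P (e - N + Suc k))" by (rule coeff_Q_poly[OF assms(1)])
  also have "\<dots> = (\<Sum>k<N. f k * coeff ?P (e - N + Suc k)) + f N * coeff ?P (e - N + Suc N)"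
    by (simp add: lessThan_Suc_atMost[symmetric])
  also have "coeff ?P (e - N + Suc N) = 0" using assms by (intro coeff_eq_0) linarith
  also have "(\<Sum>k<N. f k * coeff ?P (e - N + Suc k)) = coeff (Fpoly f N * ?P) e"
    unfolding coeff_F_mult using assms(2)
    by (intro sum.cong refl) (auto simp: coeff_monom_mult intro!: arg_cong[where f="coeff ?P"])
  finally show ?thesis by simp
qed

lemma coeff_prod_top:
  fixes g :: "nat \<Rightarrow> 'a::idom poly"
  assumes "finite I" "\<forall>i\<in>I. degree (g i) \<le> d"
  shows "degree (prod g I) \<le> card I * d \<and> coeff (prod g I) (card I * d) = (\<Prod>i\<in>I. coeff (g i) d)"
  using assms
proof (induction I rule: finite_induct)
  case empty
  then show ?case by simp
next
  case (insert x F)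
  then have IH: "degree (prod g F) \<le> card F * d" "coeff (prod g F) (card F * d) = (\<Prod>i\<in>F. coeff (g i) d)"
    and gx: "degree (g x) \<le> d" by auto
  have "degree (g x * prod g F) \<le> d + card F * d"
    using degree_mult_le[of "g x" "prod g F"] IH(1) gx by linarith
  moreover have "coeff (g x * prod g F) (d + card F * d) = coeff (g x) d * coeff (prod g F) (card F * d)"
    by (rule coeff_mult_top[OF gx IH(1)])
  ultimately show ?case using insert.hyps IH(2) by simp
qed

lemma coeff_of_int_mult: "coeff (of_int k * (X :: 'a::comm_ring_1 poly)) e = of_int k * coeff X e"
  by (simp add: of_int_poly)

lemma det_top_coeff:
  fixes B :: "'a::idom poly mat"
  assumes B: "B \<in> carrier_mat m m" and deg: "\<And>i j. i < m \<Longrightarrow> j < m \<Longrightarrow> degree (B $$ (i, j)) \<le> d"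
  shows "degree (det B) \<le> m * d" "coeff (det B) (m * d) = det (map_mat (\<lambda>p. coeff p d) B)"
proof -
  let ?PU = "{p. p permutes {0..<m}}"
  have pr: "degree (\<Prod>i = 0..<m. B $$ (i, p i)) \<le> m * d \<and>
      coeff (\<Prod>i = 0..<m. B $$ (i, p i)) (m * d) = (\<Prod>i = 0..<m. coeff (B $$ (i, p i)) d)"
    if "p \<in> ?PU" for p
  proof -
    have "\<forall>i\<in>{0..<m}. degree (B $$ (i, p i)) \<le> d"
      using that deg permutes_in_image[of p "{0..<m}"] by auto
    from coeff_prod_top[OF _ this] show ?thesis by simp
  qed
  have ce: "coeff (det B) e = (\<Sum>p\<in>?PU. signof p * coeff (\<Prod>i = 0..<m. B $$ (i, p i)) e)" for e
    unfolding det_def'[OF B] coeff_sum coeff_of_int_mult ..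
  show "degree (det B) \<le> m * d"
  proof (rule degree_le, intro allI impI)
    fix e assume "m * d < e"
    then show "coeff (det B) e = 0" unfolding ce
    proof (intro sum.neutral ballI)
      fix p assume "p \<in> ?PU"
      with pr[OF this] \<open>m * d < e\<close> have "degree (\<Prod>i = 0..<m. B $$ (i, p i)) < e" by linarith
      then show "signof p * coeff (\<Prod>i = 0..<m. B $$ (i, p i)) e = 0" by (simp add: coeff_eq_0)
    qed
  qed
  have "coeff (det B) (m * d) = (\<Sum>p\<in>?PU. signof p * (\<Prod>i = 0..<m. coeff (B $$ (i, p i)) d))"
    unfolding ce using pr by (intro sum.cong) auto
  also have "\<dots> = det (map_mat (\<lambda>p. coeff p d) B)"
  proof -
    have Bm: "map_mat (\<lambda>p. coeff p d) B \<in> carrier_mat m m" using B by simp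
    show ?thesis unfolding det_def'[OF Bm]
    proof (rule sum.cong[OF refl])
      fix p assume "p \<in> ?PU"
      then have "\<And>i. i \<in> {0..<m} \<Longrightarrow> p i < m" using permutes_in_image[of p "{0..<m}"] by auto
      then show "signof p * (\<Prod>i = 0..<m. coeff (B $$ (i, p i)) d) =
          signof p * (\<Prod>i = 0..<m. map_mat (\<lambda>p. coeff p d) B $$ (i, p i))"
        using B by (intro arg_cong2[where f="(*)"] refl prod.cong) auto
    qed
  qed
  finally show "coeff (det B) (m * d) = det (map_mat (\<lambda>p. coeff p d) B)" .
qed

lemma det_lower_tri_prod:
  fixes A :: "'a::comm_ring_1 mat"
  assumes "A \<in> carrier_mat n n" "\<And>i j. i < j \<Longrightarrow> j < n \<Longrightarrow> A $$ (i, j) = 0"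
  shows "det A = (\<Prod>i = 0..<n. A $$ (i, i))"
  using det_lower_triangular[OF assms(2) assms(1)] prod_list_diag_prod[of A] assms(1) by simp

lemma psi_comb: "psi (\<lambda>k. \<Sum>j\<in>J. c j * f j k) p = (\<Sum>j\<in>J. c j * psi (f j) p)"
  unfolding psi_def sum_distrib_right sum_distrib_left
  by (subst sum.swap) (simp add: mult.assoc)

locale padeF = padeS a b w for a b :: "'a::field_char_0 poly" and w :: nat +
  fixes f :: "nat \<Rightarrow> nat \<Rightarrow> 'a"
  assumes lin_indep: "\<And>c :: nat \<Rightarrow> 'a. (\<forall>k. (\<Sum>j\<le>w. c j * f j k) = 0) \<Longrightarrow> \<forall>j\<le>w. c j = 0"
    and L_poly: "\<And>j. j \<le> w \<Longrightarrow> L_in_poly a b (f j)"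
begin

lemma psi0: "j \<le> w \<Longrightarrow> psi (f j) (D 1 q) = 0"
  using psi_Dop_zero[OF L_poly] by blast

lemma C_nonsing:
  assumes dr: "degree r \<le> w" and z: "\<And>j. j \<le> w \<Longrightarrow> psi (f j) r = 0"
  shows "r = 0"
proof (rule ccontr)
  assume rnz: "r \<noteq> 0"
  let ?C = "mat (w + 1) (w + 1) (\<lambda>(j, m). f j m)"
  let ?v = "vec (w + 1) (\<lambda>m. coeff r m)"
  have Cc: "?C \<in> carrier_mat (w + 1) (w + 1)" by simp
  have "?v \<noteq> 0\<^sub>v (w + 1)"
  proof
    assume "?v = 0\<^sub>v (w + 1)"
    then have "?v $ degree r = 0\<^sub>v (w + 1) $ degree r" by simp
    then have "coeff r (degree r) = 0" using dr by simp
    then show False using rnz by simp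
  qed
  moreover have "?C *\<^sub>v ?v = 0\<^sub>v (w + 1)"
  proof (rule eq_vecI)
    fix j assume "j < dim_vec (0\<^sub>v (w + 1) :: 'a vec)"
    then have j: "j < w + 1" by simp
    have "(?C *\<^sub>v ?v) $ j = (\<Sum>m\<in>{0..<w + 1}. f j m * coeff r m)"
      using j by (simp add: scalar_prod_def row_def)
    also have "\<dots> = (\<Sum>m\<le>w. f j m * coeff r m)" by (intro sum.cong) auto
    also have "\<dots> = psi (f j) r" by (rule psi_ext[symmetric, OF dr])
    also have "\<dots> = 0" using z j by simp
    finally show "(?C *\<^sub>v ?v) $ j = 0\<^sub>v (w + 1) $ j" using j by simp
  qed simp
  moreover have "?v \<in> carrier_vec (w + 1)" by simp
  ultimately have "det ?C = 0" using det_0_iff_vec_prod_zero_field[OF Cc] by blast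
  then have "det (transpose_mat ?C) = 0" using det_transpose[OF Cc] by simp
  moreover have CT: "transpose_mat ?C \<in> carrier_mat (w + 1) (w + 1)" by simp
  ultimately obtain c where c: "c \<in> carrier_vec (w + 1)" "c \<noteq> 0\<^sub>v (w + 1)"
      "transpose_mat ?C *\<^sub>v c = 0\<^sub>v (w + 1)"
    using det_0_iff_vec_prod_zero_field[OF CT] by blast
  define g where "g = (\<lambda>k. \<Sum>j\<le>w. c $ j * f j k)"
  have gD: "psi g (D 1 q) = 0" for q
    unfolding g_def psi_comb using psi0 by simp
  have ginit: "g m = 0" if "m \<le> w" for m
  proof -
    have "(transpose_mat ?C *\<^sub>v c) $ m = 0" using c(3) that by simp
    moreover have "(transpose_mat ?C *\<^sub>v c) $ m = (\<Sum>j\<in>{0..<w + 1}. f j m * c $ j)"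
      using that c(1) by (simp add: scalar_prod_def row_def)
    moreover have "(\<Sum>j\<in>{0..<w + 1}. f j m * c $ j) = g m"
      unfolding g_def by (intro sum.cong) (auto simp: mult.commute)
    ultimately show ?thesis by simp
  qed
  have "\<forall>k. (\<Sum>j\<le>w. c $ j * f j k) = 0"
    using rec_zero[of g, OF gD ginit] unfolding g_def by blast
  from lin_indep[OF this] have "\<forall>j\<le>w. c $ j = 0" .
  then have "c = 0\<^sub>v (w + 1)" using c(1) by (intro eq_vecI) auto
  with c(2) show False by simp
qed

lemma M_nonsing:
  assumes dp: "degree p \<le> w" and z: "\<And>j. j \<le> w \<Longrightarrow> psi (f j) (a ^ n * p) = 0"
  shows "p = 0"
proof -
  obtain q r where qr: "a ^ n * p = D 1 q + r" "degree r \<le> w" using reduce by blast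
  have "psi (f j) r = 0" if "j \<le> w" for j
  proof -
    have "psi (f j) r = psi (f j) (a ^ n * p) - psi (f j) (D 1 q)"
      unfolding qr(1) psi_add by simp
    then show ?thesis using z[OF that] psi0[OF that] by simp
  qed
  then have "r = 0" using C_nonsing[OF qr(2)] by blast
  then have "a ^ n * p = D 1 q" using qr(1) by simp
  then show ?thesis using descent[of n p 1 q] dp by simp
qed

end

context padeF
begin

lemma main:
  shows "Delta a b w f n \<noteq> 0 \<and> degree (Delta a b w f n) = 0"
proof -
  define m where "m = w + 2"
  define DP where "DP = (n + 1) * (w + 1)"
  define N where "N = DP + n + 1"
  let ?P = "\<lambda>l. P_poly a b n l"
  let ?Q = "\<lambda>j l. Q_poly a b (f j) n l"
  define A where "A = mat m m (\<lambda>(i, l). if i = 0 then ?P l else ?Q (i - 1) l)"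
  define S where "S = mat m m (\<lambda>(i, j). if i = j then (if i = 0 then 1 else monom 1 N) else (0 :: 'a poly))"
  define E where "E = mat m m (\<lambda>(i, j). if i = j then 1 else if j = 0 then Fpoly (f (i - 1)) N else (0 :: 'a poly))"
  define B where "B = mat m m (\<lambda>(i, l). if i = 0 then ?P l else monom 1 N * ?Q (i - 1) l - Fpoly (f (i - 1)) N * ?P l)"
  have DeltaA: "Delta a b w f n = det A" unfolding Delta_def A_def m_def by simp
  have Ac: "A \<in> carrier_mat m m" and Sc: "S \<in> carrier_mat m m" and Ec: "E \<in> carrier_mat m m"
    and Bc: "B \<in> carrier_mat m m" unfolding A_def S_def E_def B_def by simp_all
  have degP: "degree (?P l) \<le> DP" if "l < m" for l
    using P_degree(1)[of n l] that by (simp add: DP_def m_def)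
  have SA: "S * A = E * B"
  proof (rule eq_matI)
    fix i l assume "i < dim_row (E * B)" "l < dim_col (E * B)"
    then have i: "i < m" and l: "l < m" using Ec Bc by auto
    have "(S * A) $$ (i, l) = (\<Sum>k\<in>{0..<m}. S $$ (i, k) * A $$ (k, l))"
      using i l Sc Ac by (simp add: scalar_prod_def)
    also have "\<dots> = (\<Sum>k\<in>{0..<m}. if k = i then (if i = 0 then ?P l else monom 1 N * ?Q (i - 1) l) else 0)"
      using i l by (intro sum.cong) (auto simp: S_def A_def)
    also have "\<dots> = (if i = 0 then ?P l else monom 1 N * ?Q (i - 1) l)" using i by simp
    finally have L: "(S * A) $$ (i, l) = \<dots>" .
    have "(E * B) $$ (i, l) = (\<Sum>k\<in>{0..<m}. E $$ (i, k) * B $$ (k, l))"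
      using i l Ec Bc by (simp add: scalar_prod_def)
    also have "\<dots> = (\<Sum>k\<in>{0..<m}. (if k = i then B $$ (i, l) else 0) +
        (if k = 0 \<and> i \<noteq> 0 then Fpoly (f (i - 1)) N * ?P l else 0))"
      using i l by (intro sum.cong) (auto simp: E_def B_def)
    also have "\<dots> = B $$ (i, l) + (if i \<noteq> 0 then Fpoly (f (i - 1)) N * ?P l else 0)"
      using i by (simp add: sum.distrib m_def)
    also have "\<dots> = (if i = 0 then ?P l else monom 1 N * ?Q (i - 1) l)"
      using i l by (simp add: B_def)
    finally show "(S * A) $$ (i, l) = (E * B) $$ (i, l)" using L by simp
  qed (use Sc Ac Ec Bc in auto)
  have detS: "det S = monom 1 N ^ (w + 1)"
  proof -
    have "det S = (\<Prod>i = 0..<m. S $$ (i, i))"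
      by (rule det_lower_tri_prod[OF Sc]) (simp add: S_def)
    also have "\<dots> = (\<Prod>i = 0..<Suc (w + 1). if i = 0 then 1 else monom 1 N)"
      by (intro prod.cong) (auto simp: S_def m_def)
    also have "\<dots> = monom 1 N ^ (w + 1)"
      by (simp add: prod.atLeast0_lessThan_Suc_shift del: prod.op_ivl_Suc)
    finally show ?thesis .
  qed
  have detE: "det E = 1"
  proof -
    have "det E = (\<Prod>i = 0..<m. E $$ (i, i))"
      by (rule det_lower_tri_prod[OF Ec]) (simp add: E_def)
    also have "\<dots> = 1" by (intro prod.neutral) (simp add: E_def)
    finally show ?thesis .
  qed
  have key: "monom 1 N ^ (w + 1) * Delta a b w f n = det B"
    using det_mult[OF Sc Ac] det_mult[OF Ec Bc] SA detS detE DeltaA by simp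
  have Bent_high: "coeff (B $$ (i, l)) e = 0" if "i < m" "l < m" "DP < e" for i l e
  proof (cases "i = 0")
    case True
    then show ?thesis using that degP[OF that(2)] by (simp add: B_def coeff_eq_0)
  next
    case False
    have dPN: "degree (?P l) \<le> N" using degP[OF that(2)] by (simp add: N_def)
    show ?thesis
    proof (cases "N \<le> e")
      case True
      then show ?thesis using coeff_Bent_high[OF dPN True] that False by (simp add: B_def)
    next
      case False2: False
      have "coeff (monom 1 N * ?Q (i - 1) l - Fpoly (f (i - 1)) N * ?P l) e
          = - psi (f (i - 1)) (monom 1 (N - 1 - e) * ?P l)"
        by (rule coeff_Bent_low[OF degP[OF that(2)]]) (use False2 that in \<open>simp_all add: N_def\<close>)
      also have "psi (f (i - 1)) (monom 1 (N - 1 - e) * ?P l) = 0"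
        using psi_P[OF psi0, of "i - 1" "N - 1 - e" n l] that False2 by (simp add: N_def m_def)
      finally show ?thesis using that False by (simp add: B_def)
    qed
  qed
  have degB: "degree (B $$ (i, l)) \<le> DP" if "i < m" "l < m" for i l
    using Bent_high[OF that] by (intro degree_le) auto
  let ?T = "map_mat (\<lambda>p. coeff p DP) B"
  have T0: "?T $$ (0, l) = (if l = w + 1 then lead_coeff (?P (w + 1)) else 0)" if "l < m" for l
  proof -
    have "?T $$ (0, l) = coeff (?P l) DP" using that Bc by (simp add: B_def m_def)
    also have "\<dots> = (if l = w + 1 then lead_coeff (?P (w + 1)) else 0)"
    proof (cases "l = w + 1")
      case True
      then show ?thesis using P_degree(1)[of n l] by (simp add: DP_def algebra_simps)
    next
      case False
      then have "l < w + 1" using that by (simp add: m_def)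
      then have "degree (?P l) < DP" using P_degree(1)[of n l] by (simp add: DP_def algebra_simps)
      then show ?thesis using False by (simp add: coeff_eq_0)
    qed
    finally show ?thesis .
  qed
  have Tj: "?T $$ (Suc j, l) = - ((-1) ^ n * psi (f j) (a ^ n * monom 1 l))" if "j \<le> w" "l < m" for j l
  proof -
    have "?T $$ (Suc j, l) = coeff (monom 1 N * ?Q j l - Fpoly (f j) N * ?P l) DP"
      using that Bc by (simp add: B_def m_def)
    also have "\<dots> = - psi (f j) (monom 1 (N - 1 - DP) * ?P l)"
      by (rule coeff_Bent_low[OF degP[OF that(2)]]) (simp_all add: N_def)
    also have "N - 1 - DP = n" by (simp add: N_def)
    also have "psi (f j) (monom 1 n * ?P l) = (-1) ^ n * psi (f j) (a ^ n * monom 1 l)"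
      using psi_P[OF psi0[OF that(1)], of n n l] by simp
    finally show ?thesis .
  qed
  have Tc: "?T \<in> carrier_mat m m" using Bc by simp
  have detT: "det ?T \<noteq> 0"
  proof
    assume "det ?T = 0"
    then obtain v where v: "v \<in> carrier_vec m" "v \<noteq> 0\<^sub>v m" "?T *\<^sub>v v = 0\<^sub>v m"
      using det_0_iff_vec_prod_zero_field[OF Tc] by blast
    have rowT: "(\<Sum>l\<in>{0..<m}. ?T $$ (i, l) * v $ l) = 0" if "i < m" for i
    proof -
      have "(?T *\<^sub>v v) $ i = 0" using v(3) that by simp
      then show ?thesis using that v(1) Bc by (simp add: scalar_prod_def)
    qed
    have lcP: "lead_coeff (?P (w + 1)) \<noteq> 0" using P_degree(2)[of n "w + 1"] by simp
    have "(\<Sum>l\<in>{0..<m}. ?T $$ (0, l) * v $ l) = lead_coeff (?P (w + 1)) * v $ (w + 1)"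
      by (subst sum.cong[OF refl, of _ _ "\<lambda>l. if l = w + 1 then lead_coeff (?P (w + 1)) * v $ (w + 1) else 0"])
         (auto simp: T0 m_def)
    then have vlast: "v $ (w + 1) = 0" using rowT[of 0] lcP by (simp add: m_def)
    define p where "p = (\<Sum>l\<le>w. smult (v $ l) (monom 1 l))"
    have coeffp: "coeff p k = (if k \<le> w then v $ k else 0)" for k
    proof -
      have "(\<Sum>l\<le>w. v $ l * coeff (monom 1 l) k) = (\<Sum>l\<le>w. if l = k then v $ k else 0)"
        by (rule sum.cong) (auto simp: coeff_monom)
      then show ?thesis unfolding p_def coeff_sum coeff_smult by simp
    qed
    have dp: "degree p \<le> w" by (rule degree_le) (simp add: coeffp)
    have "psi (f j) (a ^ n * p) = 0" if j: "j \<le> w" for j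
    proof -
      have "psi (f j) (a ^ n * p) = (\<Sum>l\<le>w. v $ l * psi (f j) (a ^ n * monom 1 l))"
        unfolding p_def sum_distrib_left psi_sum by (simp add: psi_smult mult_smult_right)
      also have "\<dots> = (\<Sum>l\<in>{0..<m}. v $ l * psi (f j) (a ^ n * monom 1 l))"
      proof (rule sum.mono_neutral_left)
        show "\<forall>i\<in>{0..<m} - {..w}. v $ i * psi (f j) (a ^ n * monom 1 i) = 0"
        proof
          fix i assume "i \<in> {0..<m} - {..w}"
          then have "i = w + 1" by (auto simp: m_def)
          then show "v $ i * psi (f j) (a ^ n * monom 1 i) = 0" using vlast by simp
        qed
      qed (auto simp: m_def)
      also have "\<dots> = - ((-1) ^ n) * (\<Sum>l\<in>{0..<m}. ?T $$ (Suc j, l) * v $ l)"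
        unfolding sum_distrib_left using j by (intro sum.cong refl) (simp add: Tj)
      also have "\<dots> = 0" using rowT[of "Suc j"] j by (simp add: m_def)
      finally show ?thesis .
    qed
    then have "p = 0" using M_nonsing[OF dp] by blast
    then have "v = 0\<^sub>v m"
    proof (intro eq_vecI)
      fix k assume "p = 0" "k < dim_vec (0\<^sub>v m :: 'a vec)"
      show "v $ k = 0\<^sub>v m $ k"
      proof (cases "k \<le> w")
        case True
        then show ?thesis using coeffp[of k] \<open>p = 0\<close> \<open>k < dim_vec (0\<^sub>v m :: 'a vec)\<close> by simp
      next
        case False
        then have "k = w + 1" using \<open>k < dim_vec (0\<^sub>v m :: 'a vec)\<close> by (simp add: m_def)
        then show ?thesis using vlast \<open>k < dim_vec (0\<^sub>v m :: 'a vec)\<close> by simp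
      qed
    qed (use v(1) in simp)
    with v(2) show False by simp
  qed
  have cB: "coeff (det B) (m * DP) \<noteq> 0" using det_top_coeff(2)[OF Bc degB] detT by simp
  have dB: "degree (det B) = m * DP"
    using det_top_coeff(1)[OF Bc degB] cB le_degree by (metis antisym)
  have Dnz: "Delta a b w f n \<noteq> 0" using key cB by auto
  have mnz: "monom (1::'a) N ^ (w + 1) \<noteq> 0" by simp
  have "degree (monom (1::'a) N ^ (w + 1) * Delta a b w f n) = (w + 1) * N + degree (Delta a b w f n)"
  proof -
    have mp: "monom (1::'a) N ^ (w + 1) = monom 1 (N * (w + 1))" by (simp only: monom_power power_one)
    have "degree (monom (1::'a) N ^ (w + 1)) = (w + 1) * N" unfolding mp by (simp add: degree_monom_eq)
    then show ?thesis using degree_mult_eq[OF mnz Dnz] by simp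
  qed
  moreover have "(w + 1) * N = m * DP" by (simp add: N_def DP_def m_def algebra_simps)
  ultimately have "degree (Delta a b w f n) = 0" using key dB by simp
  with Dnz show ?thesis by simp
qed

end

theorem theorem3p1:
  fixes a b :: "'a::field_char_0 poly" and w :: nat and f :: "nat \<Rightarrow> nat \<Rightarrow> 'a"
  assumes a_nz: "a \<noteq> 0" and b_nz: "b \<noteq> 0"
    and w_def: "int w = max (int (degree a) - 2) (int (degree b) - 1)"
    and cond0: "int (degree a) - 1 = int (degree b) \<Longrightarrow>
        \<forall>k::nat. lead_coeff a * (of_nat k + of_nat (degree a)) + lead_coeff b \<noteq> 0"
    and lin_indep: "\<And>c :: nat \<Rightarrow> 'a. (\<forall>k. (\<Sum>j\<le>w. c j * f j k) = 0) \<Longrightarrow> \<forall>j\<le>w. c j = 0"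
    and L_poly: "\<And>j. j \<le> w \<Longrightarrow> L_in_poly a b (f j)"
    and cond_a: "\<And>n::nat. n > 0 \<Longrightarrow> coprime (smult (of_nat n) (pderiv a) + b) a"
    and cond_b: "int (degree a) - 1 = int (degree b) \<Longrightarrow>
        \<forall>k n::nat. lead_coeff a * of_nat ((k + 1) * degree a + n) + lead_coeff b \<noteq> 0"
  shows "\<forall>n::nat. Delta a b w f n \<noteq> 0 \<and> degree (Delta a b w f n) = 0"
proof -
  interpret padeF a b w f
    by (unfold_locales; (fact a_nz b_nz w_def | rule cond_a cond_b lin_indep L_poly; assumption))
  show ?thesis using main by blast
qed

end
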